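(* Let $A$ be a finite nonempty alphabet and $\zeta:A^\omega\to A^\omega$ a bijective $\omega$-sequential function. Then for every finite word $u\in A^*$ the remainder $\zeta_u$ is a bijection.
   Context: For an infinite word $z$, $z[0,n]$ is its prefix of length $n$. A map $\zeta:A^\omega\to A^\omega$ is $\omega$-sequential if whenever a finite word $u$ is a common prefix of $x$ and $y$, then $\zeta(x)[0,|u|]=\zeta(y)[0,|u|]$. For such $\zeta$ and $u\in A^*$, one has $\zeta(ux)=\epsilon(u)\zeta_u(x)$ for all $x\in A^\omega$, where $\epsilon(u)=\zeta(ux)[0,|u|]$ does not depend on $x$ and $\zeta_u:A^\omega\to A^\omega$; $\zeta_u$ is called the remainder of $\zeta$ for $u$. *)

theory Defs
  imports Main "HOL-Library.Omega_Words_Fun"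
begin

text \<open>Infinite words over alphabet 'a are 'a word = nat => 'a; finite words are lists.
  The alphabet A is the (finite, nonempty) type 'a.\<close>

definition omega_sequential :: "('a word \<Rightarrow> 'a word) \<Rightarrow> bool" where
  "omega_sequential \<zeta> \<longleftrightarrow>
     (\<forall>(u::'a list) x y. prefix (length u) x = u \<and> prefix (length u) y = u \<longrightarrow>
        prefix (length u) (\<zeta> x) = prefix (length u) (\<zeta> y))"

text \<open>The remainder zeta_u: zeta(u x) = eps(u) zeta_u(x), with eps(u) of length |u|.\<close>
definition remainder :: "('a word \<Rightarrow> 'a word) \<Rightarrow> 'a list \<Rightarrow> 'a word \<Rightarrow> 'a word" where
  "remainder \<zeta> u = (\<lambda>x. suffix (length u) (\<zeta> (u \<frown> x)))"

end

theory Submission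
  imports Defs
begin

theorem lemma4p6:
  fixes \<zeta> :: "('a::finite) word \<Rightarrow> 'a word" and u :: "'a list"
  assumes "omega_sequential \<zeta>" and "bij \<zeta>"
  shows "bij (remainder \<zeta> u)"
proof -
  define n where "n = length u"
  define c :: "'a word" where "c = (\<lambda>_. undefined)"
  define e where "e = (\<lambda>v::'a list. prefix n (\<zeta> (v \<frown> c)))"
  have seq: "prefix n (\<zeta> x) = e v" if "length v = n" "prefix n x = v" for v x
  proof -
    have "prefix (length v) (\<zeta> x) = prefix (length v) (\<zeta> (v \<frown> c))"
      using assms(1) that unfolding omega_sequential_def by (metis prefix_conc_length)
    thus ?thesis using that e_def by simp
  qed
  define S where "S = {v::'a list. length v = n}"
  have finS: "finite S" unfolding S_def using finite_lists_length_eq[OF finite_UNIV, of n] by simp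
  have "S \<subseteq> e ` S"
  proof
    fix v assume v: "v \<in> S"
    obtain w where w: "\<zeta> w = v \<frown> c" using assms(2) by (metis bij_pointE)
    have "prefix n w \<in> S" unfolding S_def by simp
    moreover have "e (prefix n w) = v"
      using seq[of "prefix n w" w] w v unfolding S_def by simp
    ultimately show "v \<in> e ` S" by (metis image_eqI)
  qed
  hence inj: "inj_on e S" using finS finite_surj_inj by blast
  have uS: "u \<in> S" unfolding S_def n_def by simp
  have r: "remainder \<zeta> u = (\<lambda>x. suffix n (\<zeta> (u \<frown> x)))"
    unfolding remainder_def n_def ..
  have pre: "prefix n (\<zeta> (u \<frown> x)) = e u" for x
    using seq[of u "u \<frown> x"] unfolding n_def by simp
  have injr: "inj (remainder \<zeta> u)"
  proof
    fix x y assume "remainder \<zeta> u x = remainder \<zeta> u y"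
    hence "suffix n (\<zeta> (u \<frown> x)) = suffix n (\<zeta> (u \<frown> y))" using r by simp
    hence "\<zeta> (u \<frown> x) = \<zeta> (u \<frown> y)"
      using pre[of x] pre[of y] prefix_suffix by metis
    hence "u \<frown> x = u \<frown> y" using assms(2) bij_is_inj injD by metis
    thus "x = y" by (metis suffix_conc_length)
  qed
  have surjr: "surj (remainder \<zeta> u)"
  proof -
   have "\<exists>x. y = remainder \<zeta> u x" for y
   proof -
    obtain w where w: "\<zeta> w = e u \<frown> y" using assms(2) by (metis bij_pointE)
    have leu: "length (e u) = n" unfolding e_def by simp
    have "prefix n w \<in> S" unfolding S_def by simp
    moreover have "e (prefix n w) = e u"
    proof -
      have "prefix n (\<zeta> w) = e u" using w leu by (metis prefix_conc_length)
      moreover have "prefix n (\<zeta> w) = e (prefix n w)" by (rule seq) simp_all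
      ultimately show ?thesis by simp
    qed
    ultimately have pw: "prefix n w = u" using inj uS by (meson inj_on_def)
    have "w = u \<frown> suffix n w" using pw prefix_suffix by metis
    hence "remainder \<zeta> u (suffix n w) = suffix n (\<zeta> w)" using r by simp
    also have "\<dots> = y" using w leu by (metis suffix_conc_length)
    finally show ?thesis by metis
   qed
   thus ?thesis unfolding surj_def by blast
  qed
  show ?thesis using injr surjr by (rule bijI)
qed

end
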